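(* There exists a constant $C>0$ such that for every sufficiently large $n$ and any two $n$-vertex $3$-uniform generalised hedgehogs $H,H'$ we have \[R(H,H')\le C n^{3/2}.\]
   Context: A $3$-graph is a $3$-uniform hypergraph. For $3$-graphs $G,H$, the ($2$-colour) Ramsey number $R(G,H)$ is the least $N$ such that every colouring of the edges of the complete $3$-graph on $N$ vertices with red and blue contains a blue copy of $G$ or a red copy of $H$. A (generalised) hedgehog is a $3$-graph on vertex set $B\sqcup S$ ($B$ the body, $S$ the spikes) in which every edge consists of one spike and two body vertices, and every spike lies in exactly one edge (different spikes may be attached to the same pair of body vertices, and some pairs of body vertices may have no spike). *)

theory Defs
  imports Complex_Main
begin

definition three_graph :: "'a set \<Rightarrow> 'a set set \<Rightarrow> bool" where
  "three_graph V E \<longleftrightarrow> finite V \<and> (\<forall>e\<in>E. e \<subseteq> V \<and> card e = 3)"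

definition gen_hedgehog :: "'a set \<Rightarrow> 'a set set \<Rightarrow> bool" where
  "gen_hedgehog V E \<longleftrightarrow> three_graph V E \<and>
     (\<exists>B S. B \<inter> S = {} \<and> B \<union> S = V \<and>
        (\<forall>e\<in>E. card (e \<inter> S) = 1 \<and> card (e \<inter> B) = 2) \<and>
        (\<forall>s\<in>S. \<exists>!e. e \<in> E \<and> s \<in> e))"

text \<open>A red/blue colouring of the complete 3-graph on {0..<N} is a map c from sets to bool
  (only its values on 3-subsets of {0..<N} matter); c e = True means e is red,
  c e = False means e is blue.\<close>
definition has_copy :: "nat \<Rightarrow> (nat set \<Rightarrow> bool) \<Rightarrow> bool \<Rightarrow> 'a set \<Rightarrow> 'a set set \<Rightarrow> bool" where
  "has_copy N c col V E \<longleftrightarrow>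
     (\<exists>f. inj_on f V \<and> f ` V \<subseteq> {0..<N} \<and> (\<forall>e\<in>E. c (f ` e) = col))"

definition ramsey3 :: "'a set \<Rightarrow> 'a set set \<Rightarrow> 'b set \<Rightarrow> 'b set set \<Rightarrow> nat" where
  "ramsey3 V E V' E' = (LEAST N. \<forall>c. has_copy N c False V E \<or> has_copy N c True V' E')"

end

theory Submission imports Defs begin

lemma embed_spikes:
  assumes "finite S" "finite X" "\<forall>s\<in>S. finite (A s) \<and> card S + card X \<le> card (A s)"
  shows "\<exists>h. inj_on h S \<and> (\<forall>s\<in>S. h s \<in> A s \<and> h s \<notin> X)"
  using assms
proof (induction S rule: finite_induct)
  case empty
  then show ?case by auto
next
  case (insert x F)
  have "\<forall>s\<in>F. finite (A s) \<and> card F + card X \<le> card (A s)"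
    using insert by auto
  then obtain h where h: "inj_on h F" "\<forall>s\<in>F. h s \<in> A s \<and> h s \<notin> X"
    using insert by blast
  have c1: "card (X \<union> h ` F) \<le> card X + card F"
    by (metis card_Un_le card_image_le insert.hyps(1) add_le_mono le_refl order_trans)
  have c2: "card (insert x F) + card X \<le> card (A x)" "finite (A x)" using insert by auto
  have "card (X \<union> h ` F) < card (A x)" using c1 c2 insert.hyps by simp
  then obtain w where w: "w \<in> A x" "w \<notin> X \<union> h ` F"
    by (metis Diff_eq_empty_iff card_mono c2(2) not_le subsetI Diff_iff all_not_in_conv
        finite_Un finite_imageI insert.hyps(1) insert.prems(1)) 
  show ?case
    apply (rule exI[of _ "h(x := w)"])
    using h w insert.hyps by (auto simp: inj_on_def)
qed

lemma embed_body:
  fixes adj :: "'a \<Rightarrow> 'a \<Rightarrow> bool" and Bad :: "nat \<Rightarrow> nat set"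
  assumes "finite T" "\<forall>T'\<subseteq>T. T' \<noteq> {} \<longrightarrow> (\<exists>v\<in>T'. card {u\<in>T'. adj v u} \<le> d)"
    "\<forall>u v. adj u v \<longrightarrow> adj v u" "\<forall>u. \<not> adj u u" "\<forall>x y. y \<in> Bad x \<longrightarrow> x \<in> Bad y"
    "\<forall>x\<in>U. finite (Bad x) \<and> card (Bad x) \<le> D" "finite U" "card T + d*D < card U"
  shows "\<exists>g. inj_on g T \<and> g`T \<subseteq> U \<and> (\<forall>u\<in>T. \<forall>v\<in>T. adj u v \<longrightarrow> g v \<notin> Bad (g u))"
  using assms
proof (induction T rule: finite_psubset_induct)
  case (psubset T)
  show ?case
  proof (cases "T = {}")
    case True
    then show ?thesis by auto
  next
    case False
    then obtain v where v: "v \<in> T" "card {u\<in>T. adj v u} \<le> d" using psubset.prems(1) by blast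
    define T0 where "T0 = T - {v}"
    have T0: "T0 \<subset> T" using v T0_def by auto
    have "card T0 < card T" using T0 psubset.hyps psubset_card_mono by blast
    then have "card T0 + d*D < card U" using psubset.prems by simp
    then obtain g0 where g0: "inj_on g0 T0" "g0`T0 \<subseteq> U" "\<forall>u\<in>T0. \<forall>w\<in>T0. adj u w \<longrightarrow> g0 w \<notin> Bad (g0 u)"
    proof -
      have "\<forall>T'\<subseteq>T0. T' \<noteq> {} \<longrightarrow> (\<exists>v\<in>T'. card {u\<in>T'. adj v u} \<le> d)"
        using psubset.prems(1) T0 by blast
      then show ?thesis using that psubset.IH[OF T0] psubset.prems \<open>card T0 + d*D < card U\<close> by blast
    qed
    define Nb where "Nb = {u\<in>T0. adj v u}"
    have finNb: "finite Nb" using Nb_def T0_def psubset.hyps by simp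
    have cNb: "card Nb \<le> d"
      by (rule order.trans[OF _ v(2)]) (auto intro!: card_mono simp: Nb_def T0_def psubset.hyps)
    define F where "F = g0`T0 \<union> (\<Union>u\<in>Nb. Bad (g0 u))"
    have "card (\<Union>u\<in>Nb. Bad (g0 u)) \<le> (\<Sum>u\<in>Nb. card (Bad (g0 u)))"
      using finNb card_UN_le by blast
    also have "\<dots> \<le> (\<Sum>u\<in>Nb. D)"
      apply (rule sum_mono) using g0(2) psubset.prems(5) Nb_def by auto
    also have "\<dots> \<le> d * D" using cNb by (simp add: mult_le_mono1)
    finally have c1: "card (\<Union>u\<in>Nb. Bad (g0 u)) \<le> d * D" .
    have finF: "finite F" unfolding F_def using finNb g0(2) psubset.prems(5) T0_def psubset.hyps
      by (auto simp: Nb_def)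
    have "card F \<le> card (g0`T0) + card (\<Union>u\<in>Nb. Bad (g0 u))"
      unfolding F_def by (rule card_Un_le)
    also have "\<dots> \<le> card T0 + d * D" using c1 card_image_le T0_def psubset.hyps
      by (meson add_le_mono finite_Diff)
    finally have "card F < card U" using \<open>card T0 + d*D < card U\<close> by simp
    then obtain w where w: "w \<in> U" "w \<notin> F"
      by (metis finF card_mono not_le subsetI)
    have Tv: "T = insert v T0" using T0_def v by auto
    show ?thesis
    proof (rule exI[of _ "g0(v := w)"], intro conjI)
      have vT0: "v \<notin> T0" using T0_def by simp
      have e1: "inj_on (g0(v := w)) T0 = inj_on g0 T0"
        by (rule inj_on_cong) (use vT0 in auto)
      have e2: "(g0(v := w)) ` T0 = g0 ` T0" using vT0 by auto
      have "w \<notin> g0 ` T0" using w(2) F_def by simp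
      then show "inj_on (g0(v := w)) T" unfolding Tv using g0(1) e1 e2 vT0 by simp
      show "(g0(v := w)) ` T \<subseteq> U" unfolding Tv using g0(2) w(1) e2 by (simp only: image_insert fun_upd_same) blast
      show "\<forall>u\<in>T. \<forall>x\<in>T. adj u x \<longrightarrow> (g0(v := w)) x \<notin> Bad ((g0(v := w)) u)"
      proof (intro ballI impI)
        fix u x assume ux: "u \<in> T" "x \<in> T" "adj u x"
        show "(g0(v := w)) x \<notin> Bad ((g0(v := w)) u)"
        proof (cases "u = v")
          case True
          then have "x \<noteq> v" using ux psubset.prems(3) by auto
          then have "x \<in> Nb" using ux True Nb_def T0_def by auto
          then have "w \<notin> Bad (g0 x)" using w F_def by auto
          then show ?thesis using True \<open>x \<noteq> v\<close> psubset.prems(4) by auto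
        next
          case False
          note uF = False
          show ?thesis
          proof (cases "x = v")
            case True
            then have "u \<in> Nb" using ux uF Nb_def T0_def psubset.prems(2) by auto
            then show ?thesis using w F_def True uF by auto
          next
            case False
            then show ?thesis using uF ux g0(3) T0_def by auto
          qed
        qed
      qed
    qed
  qed
qed


definition codeg :: "(nat set \<Rightarrow> bool) \<Rightarrow> nat \<Rightarrow> bool \<Rightarrow> nat \<Rightarrow> nat \<Rightarrow> nat" where
  "codeg c N col p q = card {z. z < N \<and> z \<noteq> p \<and> z \<noteq> q \<and> c {p,q,z} = col}"

definition bad :: "(nat set \<Rightarrow> bool) \<Rightarrow> nat \<Rightarrow> bool \<Rightarrow> nat \<Rightarrow> nat \<Rightarrow> nat set" where
  "bad c N col n x = {y. x < N \<and> y < N \<and> y \<noteq> x \<and> codeg c N col x y < n}"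

lemma codeg_sym: "codeg c N col p q = codeg c N col q p"
  unfolding codeg_def by (metis insert_commute)

lemma bad_sym: "y \<in> bad c N col n x \<Longrightarrow> x \<in> bad c N col n y"
  unfolding bad_def using codeg_sym by auto

lemma codeg_sum:
  assumes "x < N" "y < N" "x \<noteq> y"
  shows "codeg c N False x y + codeg c N True x y = N - 2"
proof -
  have "codeg c N False x y + codeg c N True x y = card ({0..<N} - {x,y})"
    unfolding codeg_def
    by (subst card_Un_disjoint[symmetric]) (auto intro!: arg_cong[where f=card])
  also have "\<dots> = N - 2" using assms by (subst card_Diff_subset) auto
  finally show ?thesis .
qed

lemma PQ:
  assumes "2*n+2 \<le> N" "x < N" "1 \<le> n"
  shows "card (bad c N False n x) < 2*n \<or> card (bad c N True n x) < 2*n"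
proof (rule ccontr)
  assume "\<not> ?thesis"
  then have a: "2*n \<le> card (bad c N False n x)" "2*n \<le> card (bad c N True n x)" by auto
  obtain P where P: "P \<subseteq> bad c N False n x" "card P = 2*n" "finite P"
    using obtain_subset_with_card_n[OF a(1)] by blast
  obtain Q where Q: "Q \<subseteq> bad c N True n x" "card Q = 2*n" "finite Q"
    using obtain_subset_with_card_n[OF a(2)] by blast
  have disj: "\<And>y. y \<in> P \<Longrightarrow> y \<notin> Q"
  proof
    fix y assume y: "y \<in> P" "y \<in> Q"
    then have "y < N" "y \<noteq> x" "codeg c N False x y < n" "codeg c N True x y < n"
      using P Q unfolding bad_def by auto
    then show False using codeg_sum[of x N y c] assms by simp
  qed
  have s1: "\<forall>y\<in>P. card {z\<in>Q. c {x,y,z} = False} \<le> n - 1"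
  proof
    fix y assume y: "y \<in> P"
    have "card {z\<in>Q. c {x,y,z} = False} \<le> codeg c N False x y"
      unfolding codeg_def
      apply (rule card_mono) apply simp
      using Q(1) y disj unfolding bad_def by auto
    moreover have "codeg c N False x y < n" using y P unfolding bad_def by auto
    ultimately show "card {z\<in>Q. c {x,y,z} = False} \<le> n - 1" by simp
  qed
  have s2: "\<forall>z\<in>Q. card {y\<in>P. c {x,y,z} = True} \<le> n - 1"
  proof
    fix z assume z: "z \<in> Q"
    have "card {y\<in>P. c {x,y,z} = True} \<le> codeg c N True x z"
      unfolding codeg_def
      apply (rule card_mono) apply simp
      using P(1) z disj unfolding bad_def by (auto simp: insert_commute)
    moreover have "codeg c N True x z < n" using z Q unfolding bad_def by auto
    ultimately show "card {y\<in>P. c {x,y,z} = True} \<le> n - 1" by simp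
  qed
  have split: "\<forall>y\<in>P. card {z\<in>Q. c {x,y,z} = False} + card {z\<in>Q. c {x,y,z} = True} = 2*n"
  proof
    fix y assume "y \<in> P"
    have "card {z\<in>Q. c {x,y,z} = False} + card {z\<in>Q. c {x,y,z} = True} = card Q"
      by (subst card_Un_disjoint[symmetric]) (use Q(3) in \<open>auto intro!: arg_cong[where f=card]\<close>)
    then show "card {z\<in>Q. c {x,y,z} = False} + card {z\<in>Q. c {x,y,z} = True} = 2*n" using Q by simp
  qed
  have "(\<Sum>y\<in>P. card {z\<in>Q. c {x,y,z} = True}) = (\<Sum>z\<in>Q. card {y\<in>P. c {x,y,z} = True})"
    by (rule sum_multicount_gen) (use P Q in auto)
  also have "\<dots> \<le> (\<Sum>z\<in>Q. n - 1)" by (rule sum_mono) (use s2 in auto)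
  finally have t2: "(\<Sum>y\<in>P. card {z\<in>Q. c {x,y,z} = True}) \<le> 2*n*(n-1)" using Q by simp
  have t1: "(\<Sum>y\<in>P. card {z\<in>Q. c {x,y,z} = False}) \<le> 2*n*(n-1)"
    using sum_mono[of P "\<lambda>y. card {z\<in>Q. c {x,y,z} = False}" "\<lambda>_. n - 1"] s1 P by simp
  have "(\<Sum>y\<in>P. card {z\<in>Q. c {x,y,z} = False}) + (\<Sum>y\<in>P. card {z\<in>Q. c {x,y,z} = True})
       = (\<Sum>y\<in>P. 2*n)"
    by (subst sum.distrib[symmetric]) (rule sum.cong, use split in auto)
  also have "\<dots> = 2*n*(2*n)" using P by simp
  finally have "2*n*(2*n) \<le> 2*n*(n-1) + 2*n*(n-1)" using t1 t2 by linarith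
  then have "2*n*(2*n) \<le> 2*n*(2*(n-1))" by (simp add: algebra_simps)
  then have "2*n \<le> 2*(n-1)" using assms(3) by simp
  then show False using assms(3) by simp
qed


lemma degenerate:
  fixes E :: "'a set set"
  assumes "finite E" "\<forall>e\<in>E. card (e \<inter> B) = 2" "finite T" "T \<noteq> {}"
    "2 * card E < (d+1)*(d+2)"
  shows "\<exists>v\<in>T. card {u\<in>T. \<exists>e\<in>E. e \<inter> B = {v,u} \<and> v \<noteq> u} \<le> d"
proof (rule ccontr)
  assume "\<not> ?thesis"
  then have big: "\<forall>v\<in>T. d + 1 \<le> card {u\<in>T. \<exists>e\<in>E. e \<inter> B = {v,u} \<and> v \<noteq> u}" by auto
  define E' where "E' = {e\<in>E. e \<inter> B \<subseteq> T}"
  have finE': "finite E'" using assms(1) E'_def by simp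
  have nb: "card {u\<in>T. \<exists>e\<in>E. e \<inter> B = {v,u} \<and> v \<noteq> u} \<le> card {e\<in>E'. v \<in> e \<inter> B}"
    if v: "v \<in> T" for v
  proof -
    have sub: "{u\<in>T. \<exists>e\<in>E. e \<inter> B = {v,u} \<and> v \<noteq> u} \<subseteq> (\<lambda>e. the_elem (e \<inter> B - {v})) ` {e\<in>E'. v \<in> e \<inter> B}"
    proof
      fix u assume "u \<in> {u\<in>T. \<exists>e\<in>E. e \<inter> B = {v,u} \<and> v \<noteq> u}"
      then obtain e where e: "u \<in> T" "e \<in> E" "e \<inter> B = {v,u}" "v \<noteq> u" by auto
      have "e \<in> {e\<in>E'. v \<in> e \<inter> B}" using e v E'_def by auto
      moreover have "the_elem (e \<inter> B - {v}) = u" using e by auto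
      ultimately show "u \<in> (\<lambda>e. the_elem (e \<inter> B - {v})) ` {e\<in>E'. v \<in> e \<inter> B}" by force
    qed
    have "finite {e\<in>E'. v \<in> e \<inter> B}" using finE' by simp
    then show ?thesis using sub
      by (meson card_image_le card_mono finite_imageI order_trans)
  qed
  obtain v0 where v0: "v0 \<in> T" using assms(4) by auto
  have "card {u\<in>T. \<exists>e\<in>E. e \<inter> B = {v0,u} \<and> v0 \<noteq> u} \<le> card (T - {v0})"
    by (rule card_mono) (use assms(3) in auto)
  also have "\<dots> = card T - 1" using v0 assms(3) by simp
  finally have "card {u\<in>T. \<exists>e\<in>E. e \<inter> B = {v0,u} \<and> v0 \<noteq> u} \<le> card T - 1" .
  then have cT: "d + 2 \<le> card T" using big v0 by fastforce
  have "(\<Sum>v\<in>T. card {e\<in>E'. v \<in> e \<inter> B}) = (\<Sum>e\<in>E'. card {v\<in>T. v \<in> e \<inter> B})"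
    by (rule sum_multicount_gen) (use assms(3) finE' in auto)
  also have "\<dots> = (\<Sum>e\<in>E'. 2)"
  proof (rule sum.cong)
    fix e assume "e \<in> E'"
    then have "{v\<in>T. v \<in> e \<inter> B} = e \<inter> B" "card (e \<inter> B) = 2" using E'_def assms(2) by auto
    then show "card {v\<in>T. v \<in> e \<inter> B} = 2" by simp
  qed simp
  also have "\<dots> = 2 * card E'" by simp
  also have "\<dots> \<le> 2 * card E" using E'_def assms(1) by (simp add: card_mono)
  finally have up: "(\<Sum>v\<in>T. card {e\<in>E'. v \<in> e \<inter> B}) \<le> 2 * card E" .
  have "(\<Sum>v\<in>T. d + 1) \<le> (\<Sum>v\<in>T. card {e\<in>E'. v \<in> e \<inter> B})"
    by (rule sum_mono) (use big nb in force)
  then have "card T * (d+1) \<le> 2 * card E" using up by simp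
  moreover have "(d+2) * (d+1) \<le> card T * (d+1)" using cT by (rule mult_le_mono1)
  ultimately show False using assms(5) by (simp add: algebra_simps)
qed


lemma embed:
  fixes V :: "'a set" and E :: "'a set set"
  assumes hh: "gen_hedgehog V E" and cV: "card V = n" and U: "U \<subseteq> {0..<N}"
    and Ub: "\<forall>x\<in>U. card (bad c N col n x) < 2*n" and dd: "2*n < (d+1)*(d+2)"
    and cU: "n + d*(2*n) < card U"
  shows "has_copy N c col V E"
proof -
  have tg: "three_graph V E" using hh gen_hedgehog_def by blast
  then have finV: "finite V" and Esub: "\<forall>e\<in>E. e \<subseteq> V \<and> card e = 3"
    unfolding three_graph_def by auto
  obtain B S where BS: "B \<inter> S = {}" "B \<union> S = V"
     "\<forall>e\<in>E. card (e \<inter> S) = 1 \<and> card (e \<inter> B) = 2" "\<forall>s\<in>S. \<exists>!e. e \<in> E \<and> s \<in> e"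
    using hh unfolding gen_hedgehog_def by blast
  have finB: "finite B" and finS: "finite S" using BS(2) finV by auto
  have cBS: "card B + card S = n" using BS(1,2) cV finB finS card_Un_disjoint by metis
  have finE: "finite E"
  proof -
    have "E \<subseteq> Pow V" using Esub by auto
    then show ?thesis using finV finite_subset by blast
  qed
  define sp where "sp e = the_elem (e \<inter> S)" for e
  have sp: "e \<inter> S = {sp e}" if "e \<in> E" for e
    using BS(3) that unfolding sp_def by (metis card_1_singleton_iff One_nat_def the_elem_eq)
  have "inj_on sp E"
  proof
    fix e1 e2 assume e: "e1 \<in> E" "e2 \<in> E" "sp e1 = sp e2"
    have "sp e1 \<in> S" "sp e1 \<in> e1" "sp e1 \<in> e2" using sp[OF e(1)] sp[OF e(2)] e(3) by auto
    then show "e1 = e2" using BS(4) e by blast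
  qed
  moreover have "sp ` E \<subseteq> S" using sp by auto
  ultimately have "card E \<le> card S" using card_inj_on_le finS by blast
  then have cE: "2 * card E < (d+1)*(d+2)" using dd cBS by linarith
  define adj where "adj = (\<lambda>v u. \<exists>e\<in>E. e \<inter> B = {v,u} \<and> v \<noteq> u)"
  have deg: "\<forall>T'\<subseteq>B. T' \<noteq> {} \<longrightarrow> (\<exists>v\<in>T'. card {u\<in>T'. adj v u} \<le> d)"
  proof (intro allI impI)
    fix T' assume T': "T' \<subseteq> B" "T' \<noteq> {}"
    have "finite T'" using T' finB finite_subset by blast
    then show "\<exists>v\<in>T'. card {u\<in>T'. adj v u} \<le> d"
      unfolding adj_def using degenerate[OF finE _ _ T'(2) cE] BS(3) by blast
  qed
  have asym: "\<forall>u v. adj u v \<longrightarrow> adj v u" unfolding adj_def by (auto simp: insert_commute)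
  have airr: "\<forall>u. \<not> adj u u" unfolding adj_def by auto
  have bsym: "\<forall>x y. y \<in> bad c N col n x \<longrightarrow> x \<in> bad c N col n y" using bad_sym by blast
  have bfin: "\<forall>x\<in>U. finite (bad c N col n x) \<and> card (bad c N col n x) \<le> 2*n"
  proof
    fix x assume "x \<in> U"
    have "bad c N col n x \<subseteq> {..<N}" unfolding bad_def by auto
    then show "finite (bad c N col n x) \<and> card (bad c N col n x) \<le> 2*n"
      using Ub \<open>x \<in> U\<close> finite_subset by fastforce
  qed
  have finU: "finite U" using U finite_subset by blast
  have "card B + d*(2*n) < card U" using cU cBS by linarith
  then obtain g where g: "inj_on g B" "g ` B \<subseteq> U"
      "\<forall>u\<in>B. \<forall>v\<in>B. adj u v \<longrightarrow> g v \<notin> bad c N col n (g u)"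
    using embed_body[OF finB deg asym airr bsym bfin finU] by blast
  define es where "es s = (THE e. e \<in> E \<and> s \<in> e)" for s
  have es: "es s \<in> E \<and> s \<in> es s" if "s \<in> S" for s
    using theI'[OF BS(4)[rule_format, OF that]] unfolding es_def by blast
  define A where "A s = {z. z < N \<and> z \<notin> g ` (es s \<inter> B) \<and> c (insert z (g ` (es s \<inter> B))) = col}" for s
  have Afin: "finite (A s)" for s unfolding A_def by simp
  have Acard: "n \<le> card (A s)" if s: "s \<in> S" for s
  proof -
    have "card (es s \<inter> B) = 2" using es[OF s] BS(3) by blast
    then obtain x y where xy: "es s \<inter> B = {x,y}" "x \<noteq> y" using card_2_iff by metis
    then have xyB: "x \<in> B" "y \<in> B" by auto
    have "adj x y" unfolding adj_def using es[OF s] xy by blast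
    then have nb: "g y \<notin> bad c N col n (g x)" using g(3) xyB by blast
    have gU: "g x \<in> U" "g y \<in> U" using g(2) xyB by auto
    have gxy: "g x < N" "g y < N" "g x \<noteq> g y" using g(1) gU xyB xy(2) U
      by (auto simp: inj_on_def)
    then have "n \<le> codeg c N col (g x) (g y)" using nb unfolding bad_def by auto
    also have "codeg c N col (g x) (g y) = card (A s)"
      unfolding codeg_def A_def xy by (auto intro!: arg_cong[where f=card] simp: insert_commute)
    finally show ?thesis .
  qed
  have "\<forall>s\<in>S. finite (A s) \<and> card S + card (g ` B) \<le> card (A s)"
  proof
    fix s assume "s \<in> S"
    have "card (g ` B) \<le> card B" by (rule card_image_le[OF finB])
    then show "finite (A s) \<and> card S + card (g ` B) \<le> card (A s)"
      using Afin[of s] Acard[OF \<open>s \<in> S\<close>] cBS by simp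
  qed
  then obtain h where h: "inj_on h S" "\<forall>s\<in>S. h s \<in> A s \<and> h s \<notin> g ` B"
    using embed_spikes[OF finS finite_imageI[OF finB]] by blast
  define f where "f v = (if v \<in> B then g v else h v)" for v
  show ?thesis unfolding has_copy_def
  proof (intro exI[of _ f] conjI)
    show "inj_on f V"
    proof
      fix a b assume ab: "a \<in> V" "b \<in> V" "f a = f b"
      show "a = b"
      proof (cases "a \<in> B")
        case True
        show ?thesis
        proof (cases "b \<in> B")
          case True
          then show ?thesis using \<open>a \<in> B\<close> ab g(1) unfolding f_def by (auto simp: inj_on_def)
        next
          case False
          then have "b \<in> S" using ab BS(2) by auto
          then show ?thesis using \<open>a \<in> B\<close> False ab h(2) unfolding f_def by force
        qed
      next
        case False
        then have aS: "a \<in> S" using ab BS(2) by auto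
        show ?thesis
        proof (cases "b \<in> B")
          case True
          then show ?thesis using aS False ab h(2) unfolding f_def by force
        next
          case bF: False
          then have "b \<in> S" using ab BS(2) by auto
          then show ?thesis using aS False bF ab h(1) unfolding f_def by (auto simp: inj_on_def)
        qed
      qed
    qed
    show "f ` V \<subseteq> {0..<N}"
    proof
      fix y assume "y \<in> f ` V"
      then obtain v where v: "v \<in> V" "y = f v" by auto
      show "y \<in> {0..<N}"
      proof (cases "v \<in> B")
        case True
        have "g v \<in> U" using True g(2) by auto
        then have "g v \<in> {0..<N}" using U by blast
        then show ?thesis using v True unfolding f_def by simp
      next
        case False
        then have "v \<in> S" using v BS(2) by auto
        then show ?thesis using v False h(2) unfolding f_def A_def by auto
      qed
    qed
    show "\<forall>e\<in>E. c (f ` e) = col"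
    proof
      fix e assume e: "e \<in> E"
      define s where "s = sp e"
      have eS: "e \<inter> S = {s}" using sp[OF e] s_def by simp
      then have sS: "s \<in> S" "s \<in> e" by auto
      have "es s = e" using es[OF sS(1)] BS(4) sS e by blast
      have eBS: "e = (e \<inter> B) \<union> {s}" using eS Esub e BS(2) by blast
      have "f ` e = insert (h s) (g ` (e \<inter> B))"
      proof -
        have "f ` e = f ` (e \<inter> B) \<union> {f s}" using eBS by (metis image_Un image_empty image_insert)
        also have "f ` (e \<inter> B) = g ` (e \<inter> B)" unfolding f_def by auto
        also have "f s = h s" unfolding f_def using sS BS(1) by auto
        finally show ?thesis by auto
      qed
      then show "c (f ` e) = col" using h(2) sS \<open>es s = e\<close> unfolding A_def by auto
    qed
  qed
qed


lemma bound_real: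
  fixes n :: nat assumes "1 \<le> n"
  shows "real (2*n + 4*n*nat \<lfloor>sqrt (2*real n)\<rfloor> + 2) \<le> 20 * real n powr (3/2)"
proof -
  define d where "d = nat \<lfloor>sqrt (2*real n)\<rfloor>"
  have d: "real d \<le> sqrt (2*real n)" unfolding d_def by simp
  have s2: "sqrt (2*real n) = sqrt 2 * sqrt (real n)" by (simp add: real_sqrt_mult)
  have "sqrt 2 \<le> 1.5" by (rule real_le_lsqrt) (auto simp: power2_eq_square)
  then have d2: "real d \<le> 1.5 * sqrt (real n)" using d s2
    by (metis mult_right_mono real_sqrt_ge_zero of_nat_0_le_iff order_trans)
  have sn: "1 \<le> sqrt (real n)" using assms by simp
  have p: "real n powr (3/2) = real n * sqrt (real n)"
  proof -
    have "real n powr (3/2) = real n powr (1 + 1/2)" by simp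
    also have "\<dots> = real n powr 1 * real n powr (1/2)" by (rule powr_add)
    also have "\<dots> = real n * sqrt (real n)" using assms by (simp add: powr_half_sqrt)
    finally show ?thesis .
  qed
  have "real (2*n + 4*n*d + 2) = 2 * real n + 4 * real n * real d + 2" by simp
  also have "\<dots> \<le> 2 * real n + 4 * real n * (1.5 * sqrt (real n)) + 2"
  proof -
    have "4 * real n * real d \<le> 4 * real n * (1.5 * sqrt (real n))" by (rule mult_left_mono[OF d2]) simp
    then show ?thesis by linarith
  qed
  also have "\<dots> \<le> 20 * (real n * sqrt (real n))"
  proof -
    have "real n \<le> real n * sqrt (real n)" using sn assms by simp
    moreover have "1 \<le> real n" using assms by simp
    moreover have "4 * real n * (1.5 * sqrt (real n)) = 6 * (real n * sqrt (real n))" by simp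
    ultimately show ?thesis by linarith
  qed
  finally show ?thesis unfolding d_def p .
qed

lemma dd_bound:
  fixes n :: nat
  shows "2*n < (nat \<lfloor>sqrt (2*real n)\<rfloor> + 1) * (nat \<lfloor>sqrt (2*real n)\<rfloor> + 2)"
proof -
  define d where "d = nat \<lfloor>sqrt (2*real n)\<rfloor>"
  have "sqrt (2*real n) < real d + 1" unfolding d_def by linarith
  then have "(sqrt (2*real n))^2 < (real d + 1)^2"
    by (intro power_strict_mono) auto
  then have "2 * real n < (real d + 1)^2" by simp
  also have "\<dots> \<le> (real d + 1) * (real d + 2)" by (simp add: power2_eq_square)
  finally have a: "2 * real n < (real d + 1) * (real d + 2)" .
  have e: "real ((d+1)*(d+2)) = (real d + 1) * (real d + 2)" by (simp add: algebra_simps)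
  have "real (2*n) < real ((d+1)*(d+2))" using a e by simp
  then show ?thesis unfolding d_def of_nat_less_iff .
qed

lemma half_lt: "(N::nat) = 2*m + 2 \<Longrightarrow> N \<le> 2*k \<Longrightarrow> m < k" by simp

lemma ramsey_bound:
  fixes V E V' E'
  assumes "gen_hedgehog V E" "card V = n" "gen_hedgehog V' E'" "card V' = n" "1 \<le> n"
  shows "ramsey3 V E V' E' \<le> 2*n + 4*n*nat \<lfloor>sqrt (2*real n)\<rfloor> + 2"
proof -
  define d where "d = nat \<lfloor>sqrt (2*real n)\<rfloor>"
  define N where "N = 2*n + 4*n*d + 2"
  have dd: "2*n < (d+1)*(d+2)" unfolding d_def by (rule dd_bound)
  have "\<forall>c. has_copy N c False V E \<or> has_copy N c True V' E'"
  proof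
    fix c
    define Ub where "Ub = {x\<in>{0..<N}. card (bad c N False n x) < 2*n}"
    define Ur where "Ur = {x\<in>{0..<N}. card (bad c N True n x) < 2*n}"
    have NN: "2*n+2 \<le> N" by (simp add: N_def)
    have inU: "x \<in> Ub \<union> Ur" if "x < N" for x
      using PQ[OF NN that assms(5), of c] that unfolding Ub_def Ur_def by auto
    have s1: "{0..<N} \<subseteq> Ub \<union> Ur"
    proof
      fix x assume "x \<in> {0..<N}"
      then show "x \<in> Ub \<union> Ur" using inU by simp
    qed
    have s2: "Ub \<union> Ur \<subseteq> {0..<N}" unfolding Ub_def Ur_def by auto
    have "Ub \<union> Ur = {0..<N}" using s1 s2 by (rule subset_antisym[rotated])
    then have "N \<le> card Ub + card Ur" by (metis card_Un_le card_atLeastLessThan diff_zero)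
    then consider "N \<le> 2 * card Ub" | "N \<le> 2 * card Ur" by linarith
    then show "has_copy N c False V E \<or> has_copy N c True V' E'"
    proof cases
      case 1
      have "has_copy N c False V E"
      proof -
        have NE: "N = 2*(n + d*(2*n)) + 2" by (simp add: N_def algebra_simps)
        have cU: "n + d*(2*n) < card Ub" using half_lt[OF NE 1] .
        show ?thesis by (rule embed[OF assms(1,2) _ _ dd cU]) (auto simp: Ub_def)
      qed
      then show ?thesis by simp
    next
      case 2
      have "has_copy N c True V' E'"
      proof -
        have NE: "N = 2*(n + d*(2*n)) + 2" by (simp add: N_def algebra_simps)
        have cU: "n + d*(2*n) < card Ur" using half_lt[OF NE 2] .
        show ?thesis by (rule embed[OF assms(3,4) _ _ dd cU]) (auto simp: Ur_def)
      qed
      then show ?thesis by simp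
    qed
  qed
  then have "ramsey3 V E V' E' \<le> N" unfolding ramsey3_def by (rule Least_le)
  then show ?thesis unfolding N_def d_def .
qed

theorem theorem1p2:
  shows "\<exists>C::real. C > 0 \<and> (\<exists>n0::nat. \<forall>n\<ge>n0. \<forall>(V::nat set) E (V'::nat set) E'.
     gen_hedgehog V E \<and> card V = n \<and> gen_hedgehog V' E' \<and> card V' = n \<longrightarrow>
     real (ramsey3 V E V' E') \<le> C * real n powr (3/2))"
proof -
  have main: "\<forall>n\<ge>(1::nat). \<forall>(V::nat set) E (V'::nat set) E'.
     gen_hedgehog V E \<and> card V = n \<and> gen_hedgehog V' E' \<and> card V' = n \<longrightarrow>
     real (ramsey3 V E V' E') \<le> 20 * real n powr (3/2)"
  proof (intro allI impI)
    fix n :: nat and V :: "nat set" and E and V' :: "nat set" and E'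
    assume n: "1 \<le> n" and h: "gen_hedgehog V E \<and> card V = n \<and> gen_hedgehog V' E' \<and> card V' = n"
    have "real (ramsey3 V E V' E') \<le> real (2*n + 4*n*nat \<lfloor>sqrt (2*real n)\<rfloor> + 2)"
      using ramsey_bound[of V E n V' E'] h n by (simp only: of_nat_le_iff)
    also have "\<dots> \<le> 20 * real n powr (3/2)" by (rule bound_real[OF n])
    finally show "real (ramsey3 V E V' E') \<le> 20 * real n powr (3/2)" .
  qed
  show ?thesis
    by (intro exI[of _ "20::real"] conjI exI[of _ "1::nat"]) (simp, rule main)
qed

end
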